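(* Let $\alpha,\beta\in[0,1]$ and let $r=w_0\to w_1\to\dots\to w_m$ ($m\in\mathbb{N}\cup\{\infty\}$) be a directed path in $T$ starting at the root, where the decoupled process with parameters $(G,r,T,\alpha,\beta)$ is run. Consider independently the decoupled process with the same $\alpha,\beta$ on the path $\mathcal{P}_m$ with vertices $u_0\to u_1\to\dots\to u_m$, root $u_0$. Then for every $t>0$ and every $0\le j<j'\le m$, $$\Pr[\mathrm{origin}_t(w_j)=\mathrm{origin}_t(w_{j'})]=\Pr[\mathrm{origin}_t(u_j)=\mathrm{origin}_t(u_{j'})],$$ where the left probability refers to the process on $T$ and the right one to the process on $\mathcal{P}_m$.
   Context: Decoupled process. Fix $\alpha,\beta\in[0,1]$, a connected locally finite undirected graph $G$, root $r$, and a BFS spanning tree $T$ of $G$ rooted at $r$, oriented away from $r$, with parent map $p$. Let $Z_0=+1$, $Z_1,Z_2,\dots$ i.i.d. uniform on $\{-1,+1\}$, $Z_\infty=\bot$. Counter $\mathrm{count}_0=1$; $\mathrm{origin}_0(r)=0$, $\mathrm{origin}_0(v)=\infty$ for $v\ne r$; the root always has origin $0$; $g_t(v)=Z_{\mathrm{origin}_t(v)}$. Update from $t$ to $t+1$ (independent choices): if $g_t(v)=g_t(p(v))=\bot$ then $\mathrm{origin}_{t+1}(v)=\infty$; nodes with $g_t(v)=\bot\ne g_t(p(v))$ are processed sequentially in a fixed order: w.p. $1-\alpha$, $\mathrm{origin}_{t+1}(v)=\mathrm{origin}_t(p(v))$; w.p. $\alpha$, $\mathrm{origin}_{t+1}(v)$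 is the current counter value and the counter is then incremented; if $g_t(v)\neq\bot$, $v\ne r$: w.p. $\beta$, $\mathrm{origin}_{t+1}(v)=\mathrm{origin}_t(p(v))$, otherwise unchanged. For $n\in\mathbb{N}\cup\{\infty\}$, $\mathcal{P}_n$ denotes the path $u_0\to u_1\to\dots\to u_n$ rooted at $u_0$ (it is its own BFS tree). *)

theory Defs
  imports "HOL-Probability.Probability" "HOL-Library.Extended_Nat"
begin

definition conn_lf_graph :: "'v set \<Rightarrow> ('v \<Rightarrow> 'v \<Rightarrow> bool) \<Rightarrow> 'v \<Rightarrow> bool" where
  "conn_lf_graph V E r \<longleftrightarrow>
     r \<in> V \<and>
     (\<forall>u v. E u v \<longrightarrow> u \<in> V \<and> v \<in> V) \<and>
     (\<forall>u v. E u v \<longrightarrow> E v u) \<and>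
     (\<forall>v. \<not> E v v) \<and>
     (\<forall>v\<in>V. finite {u. E v u}) \<and>
     (\<forall>v\<in>V. E\<^sup>*\<^sup>* r v)"

(* p is the parent map of a BFS spanning tree of (V,E) rooted at r: there is a BFS discovery
   order sigma (an injective enumeration of V by naturals) such that r comes first, every
   non-root vertex is discovered after its parent, its parent is its sigma-least neighbour
   (the first dequeued neighbour), and children of earlier-dequeued vertices are discovered
   before children of later-dequeued vertices (FIFO queue discipline). *)
definition bfs_tree :: "'v set \<Rightarrow> ('v \<Rightarrow> 'v \<Rightarrow> bool) \<Rightarrow> 'v \<Rightarrow> ('v \<Rightarrow> 'v) \<Rightarrow> bool" where
  "bfs_tree V E r p \<longleftrightarrow>
     (\<exists>\<sigma> :: 'v \<Rightarrow> nat.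
        inj_on \<sigma> V \<and>
        (\<forall>v\<in>V. \<sigma> r \<le> \<sigma> v) \<and>
        (\<forall>v\<in>V. v \<noteq> r \<longrightarrow> p v \<in> V \<and> E v (p v) \<and> \<sigma> (p v) < \<sigma> v \<and>
                 (\<forall>u. E v u \<longrightarrow> \<sigma> (p v) \<le> \<sigma> u)) \<and>
        (\<forall>u\<in>V. \<forall>v\<in>V. u \<noteq> r \<longrightarrow> v \<noteq> r \<longrightarrow> \<sigma> (p u) < \<sigma> (p v) \<longrightarrow> \<sigma> u < \<sigma> v))"

(* A state: (origin map (None = \<infinity>), counter, values Z_k drawn so far).
   The i.i.d. signs Z_1, Z_2, ... are sampled lazily: Z_k is drawn (uniform on {-1,1}) at the
   moment the counter value k is first handed out; this gives the same joint law. *)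
type_synonym 'v dstate = "('v \<Rightarrow> nat option) \<times> nat \<times> (nat \<Rightarrow> int)"

definition gval :: "'v dstate \<Rightarrow> 'v \<Rightarrow> int option" where
  "gval s v = (case fst s v of None \<Rightarrow> None | Some k \<Rightarrow> Some (snd (snd s) k))"

definition dinit :: "'v \<Rightarrow> 'v dstate" where
  "dinit r = ((\<lambda>v. if v = r then Some 0 else None), 1, (\<lambda>k. if k = 0 then 1 else 0))"

(* one step t \<rightarrow> t+1; ord is the fixed order in which the nodes with
   g_t(v) = \<bottom> \<noteq> g_t(p v) are processed *)
definition dstep :: "real \<Rightarrow> real \<Rightarrow> 'v set \<Rightarrow> 'v \<Rightarrow> ('v \<Rightarrow> 'v) \<Rightarrow> ('v \<Rightarrow> nat)
                      \<Rightarrow> 'v dstate \<Rightarrow> 'v dstate pmf" where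
  "dstep \<alpha> \<beta> V r p ord s =
     (let org = fst s; c = fst (snd s); Z = snd (snd s);
          Cset = {v\<in>V. v \<noteq> r \<and> gval s v \<noteq> None};
          Bset = {v\<in>V. v \<noteq> r \<and> gval s v = None \<and> gval s (p v) \<noteq> None}
      in bind_pmf (Pi_pmf Cset False (\<lambda>_. bernoulli_pmf \<beta>)) (\<lambda>coins.
        let org1 = (\<lambda>v. if v = r then Some 0
                      else if v \<in> Cset then (if coins v then org (p v) else org v)
                      else None)
        in foldl (\<lambda>M v. bind_pmf M (\<lambda>(org', c', Z').
                  bind_pmf (bernoulli_pmf \<alpha>) (\<lambda>b.
                  if b then bind_pmf (pmf_of_set {-1, 1 :: int}) (\<lambda>z.
                     return_pmf (org'(v := Some c'), Suc c', Z'(c' := z)))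
                  else return_pmf (org'(v := org (p v)), c', Z'))))
              (return_pmf (org1, c, Z))
              (sorted_key_list_of_set ord Bset)))"

primrec dproc :: "real \<Rightarrow> real \<Rightarrow> 'v set \<Rightarrow> 'v \<Rightarrow> ('v \<Rightarrow> 'v) \<Rightarrow> ('v \<Rightarrow> nat)
                    \<Rightarrow> nat \<Rightarrow> 'v dstate pmf" where
  "dproc \<alpha> \<beta> V r p ord 0 = return_pmf (dinit r)"
| "dproc \<alpha> \<beta> V r p ord (Suc t) = bind_pmf (dproc \<alpha> \<beta> V r p ord t) (dstep \<alpha> \<beta> V r p ord)"

definition same_origin_prob :: "real \<Rightarrow> real \<Rightarrow> 'v set \<Rightarrow> 'v \<Rightarrow> ('v \<Rightarrow> 'v) \<Rightarrow> ('v \<Rightarrow> nat)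
                                  \<Rightarrow> nat \<Rightarrow> 'v \<Rightarrow> 'v \<Rightarrow> real" where
  "same_origin_prob \<alpha> \<beta> V r p ord t x y =
     measure_pmf.prob (dproc \<alpha> \<beta> V r p ord t) {s. fst s x = fst s y}"

(* The path P_m (m \<in> \<nat> \<union> {\<infinity>}) on vertices u_i = i, root 0, parent i \<mapsto> i - 1 *)
definition path_vertices :: "enat \<Rightarrow> nat set" where
  "path_vertices m = {i. enat i \<le> m}"

definition path_parent :: "nat \<Rightarrow> nat" where
  "path_parent i = i - 1"

end

theory Submission
  imports Defs
begin


definition stepD :: "('v \<Rightarrow> nat option) \<Rightarrow> ('v \<Rightarrow> nat option) \<times> nat \<times> (nat \<Rightarrow> int) \<Rightarrow> 'v \<Rightarrow> bool \<times> int
   \<Rightarrow> ('v \<Rightarrow> nat option) \<times> nat \<times> (nat \<Rightarrow> int)" where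
 "stepD g st v bz = (case st of (o', c', Z') \<Rightarrow> if fst bz then (o'(v := Some c'), Suc c', Z'(c' := snd bz))
      else (o'(v := g v), c', Z'))"

definition detf where "detf g xs x st = foldl (\<lambda>st v. stepD g st v (x v)) st xs"

lemma detf_cong: "(\<And>v. v \<in> set xs \<Longrightarrow> x v = x' v) \<Longrightarrow> detf g xs x st = detf g xs x' st"
  unfolding detf_def by (induction xs arbitrary: st) auto

lemma fold_rand:
 assumes "distinct xs"
 shows "foldl (\<lambda>M v. bind_pmf M (\<lambda>(org', c', Z'). bind_pmf (bernoulli_pmf \<alpha>) (\<lambda>b.
    if b then bind_pmf (pmf_of_set {-1, 1 :: int}) (\<lambda>z. return_pmf (org'(v := Some c'), Suc c', Z'(c' := z)))
    else return_pmf (org'(v := g v), c', Z')))) (return_pmf st) xs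
   = map_pmf (\<lambda>x. detf g xs x st) (Pi_pmf (set xs) (False, 0) (\<lambda>_. pair_pmf (bernoulli_pmf \<alpha>) (pmf_of_set {-1,1})))"
  using assms
proof (induction xs rule: rev_induct)
  case Nil
  then show ?case by (simp add: detf_def)
next
  case (snoc y xs)
  let ?D = "pair_pmf (bernoulli_pmf \<alpha>) (pmf_of_set {-1,1::int})"
  let ?P = "Pi_pmf (set xs) (False, 0) (\<lambda>_. ?D)"
  have R: "(case st of (org', c', Z') \<Rightarrow> bind_pmf (bernoulli_pmf \<alpha>) (\<lambda>b.
    if b then bind_pmf (pmf_of_set {-1, 1 :: int}) (\<lambda>z. return_pmf (org'(y := Some c'), Suc c', Z'(c' := z)))
    else return_pmf (org'(y := g y), c', Z'))) = map_pmf (stepD g st y) ?D" for st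
    by (cases st) (auto simp: pair_pmf_def map_pmf_def bind_assoc_pmf bind_return_pmf stepD_def
        intro!: bind_pmf_cong)
  have yn: "y \<notin> set xs" using snoc by auto
  have "map_pmf (\<lambda>x. detf g (xs @ [y]) x st) (Pi_pmf (set (xs@[y])) (False, 0) (\<lambda>_. ?D))
     = map_pmf (\<lambda>x. detf g (xs @ [y]) x st) (map_pmf (\<lambda>(a,f). f(y:=a)) (pair_pmf ?D ?P))"
    by (simp add: Pi_pmf_insert yn)
  also have "\<dots> = map_pmf (\<lambda>(a,f). stepD g (detf g xs f st) y a) (pair_pmf ?D ?P)"
    unfolding pmf.map_comp
  proof (intro map_pmf_cong refl)
    fix af assume "af \<in> set_pmf (pair_pmf ?D ?P)"
    obtain a f where af: "af = (a,f)" by (cases af)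
    have "detf g xs (f(y:=a)) st = detf g xs f st" by (rule detf_cong) (use yn in auto)
    then show "((\<lambda>x. detf g (xs @ [y]) x st) \<circ> (\<lambda>(a, f). f(y := a))) af =
           (\<lambda>(a, f). stepD g (detf g xs f st) y a) af"
      unfolding af by (simp add: detf_def)
  qed
  also have "\<dots> = bind_pmf ?P (\<lambda>f. map_pmf (stepD g (detf g xs f st) y) ?D)"
    by (subst pair_commute_pmf) (simp add: pair_pmf_def map_pmf_def bind_assoc_pmf bind_return_pmf)
  finally show ?case using snoc
    by (simp add: R map_pmf_def bind_assoc_pmf bind_return_pmf cong: bind_pmf_cong)
qed

lemma detf_snoc: "detf g (xs@[y]) x st = stepD g (detf g xs x st) y (x y)"
  by (simp add: detf_def)

lemma detf_props:
  assumes "distinct xs" "detf g xs x (o0, c0, Z0) = (o', c', Z')"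
  shows "c0 \<le> c' \<and> (\<forall>v. v \<notin> set xs \<longrightarrow> o' v = o0 v) \<and> (\<forall>v\<in>set xs. \<not> fst (x v) \<longrightarrow> o' v = g v)
    \<and> (\<forall>v\<in>set xs. fst (x v) \<longrightarrow> (\<exists>k. o' v = Some k \<and> c0 \<le> k \<and> k < c'))
    \<and> (\<forall>u\<in>set xs. \<forall>v\<in>set xs. fst (x u) \<and> fst (x v) \<and> u \<noteq> v \<longrightarrow> o' u \<noteq> o' v)"
  using assms
proof (induction xs arbitrary: o' c' Z' rule: rev_induct)
  case Nil
  then show ?case by (simp add: detf_def)
next
  case (snoc y xs)
  obtain o1 c1 Z1 where d1: "detf g xs x (o0, c0, Z0) = (o1, c1, Z1)" by (cases "detf g xs x (o0, c0, Z0)") auto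
  have IH: "c0 \<le> c1 \<and> (\<forall>v. v \<notin> set xs \<longrightarrow> o1 v = o0 v) \<and> (\<forall>v\<in>set xs. \<not> fst (x v) \<longrightarrow> o1 v = g v)
    \<and> (\<forall>v\<in>set xs. fst (x v) \<longrightarrow> (\<exists>k. o1 v = Some k \<and> c0 \<le> k \<and> k < c1))
    \<and> (\<forall>u\<in>set xs. \<forall>v\<in>set xs. fst (x u) \<and> fst (x v) \<and> u \<noteq> v \<longrightarrow> o1 u \<noteq> o1 v)"
    using snoc.IH[OF _ d1] snoc.prems by auto
  have yn: "y \<notin> set xs" using snoc.prems by auto
  have st: "stepD g (o1, c1, Z1) y (x y) = (o', c', Z')" using snoc.prems(2) d1 by (simp add: detf_snoc)
  show ?case
  proof (cases "fst (x y)")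
    case True
    then have o': "o' = o1(y := Some c1)" "c' = Suc c1" using st by (auto simp: stepD_def)
    show ?thesis unfolding o' using IH yn True
      by (auto 0 3 simp: Ball_def)
  next
    case False
    then have o': "o' = o1(y := g y)" "c' = c1" using st by (auto simp: stepD_def)
    show ?thesis unfolding o' using IH yn False by (auto simp: Ball_def)
  qed
qed

lemma Pi_reindex0:
  assumes "finite I" "inj_on w I"
  shows "map_pmf (\<lambda>g i. if i \<in> I then g (w i) else d) (Pi_pmf (w ` I) d (\<lambda>_. D)) = Pi_pmf I d (\<lambda>_. D)"
  using assms
proof (induction I rule: finite_induct)
  case empty
  then show ?case by simp
next
  case (insert a I)
  have wa: "w a \<notin> w ` I" using insert by auto
  have inj: "inj_on w I" using insert by auto
  have fin: "finite (w ` I)" using insert by auto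
  have "map_pmf (\<lambda>g i. if i \<in> insert a I then g (w i) else d) (Pi_pmf (w ` insert a I) d (\<lambda>_. D))
    = map_pmf (\<lambda>g i. if i \<in> insert a I then g (w i) else d) (map_pmf (\<lambda>(y,g). g(w a := y)) (pair_pmf D (Pi_pmf (w ` I) d (\<lambda>_. D))))"
    by (simp only: image_insert Pi_pmf_insert[OF fin wa])
  also have "\<dots> = map_pmf (\<lambda>(y,h). h(a := y)) (map_pmf (\<lambda>(y,g). (y, \<lambda>i. if i \<in> I then g (w i) else d)) (pair_pmf D (Pi_pmf (w ` I) d (\<lambda>_. D))))"
    unfolding pmf.map_comp
  proof (intro map_pmf_cong refl)
    fix yg assume "yg \<in> set_pmf (pair_pmf D (Pi_pmf (w ` I) d (\<lambda>_. D)))"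
    obtain y g where yg: "yg = (y, g)" by (cases yg)
    have "(\<lambda>i. if i \<in> insert a I then (g(w a := y)) (w i) else d) = (\<lambda>i. if i \<in> I then g (w i) else d)(a := y)"
    proof
      fix i show "(if i \<in> insert a I then (g(w a := y)) (w i) else d) = ((\<lambda>i. if i \<in> I then g (w i) else d)(a := y)) i"
        using insert.prems insert.hyps by (auto simp: inj_on_def)
    qed
    then show "((\<lambda>g i. if i \<in> insert a I then g (w i) else d) \<circ> (\<lambda>(y, g). g(w a := y))) yg =
         ((\<lambda>(y, h). h(a := y)) \<circ> (\<lambda>(y, g). (y, \<lambda>i. if i \<in> I then g (w i) else d))) yg"
      unfolding yg comp_def prod.case .
  qed
  also have "\<dots> = map_pmf (\<lambda>(y,h). h(a := y)) (pair_pmf D (Pi_pmf I d (\<lambda>_. D)))"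
    using map_pair[of "\<lambda>y. y" "\<lambda>g i. if i \<in> I then g (w i) else d" D "Pi_pmf (w ` I) d (\<lambda>_. D)"]
      insert.IH[OF inj] by simp
  also have "\<dots> = Pi_pmf (insert a I) d (\<lambda>_. D)"
    by (simp only: Pi_pmf_insert[OF insert.hyps(1,2)])
  finally show ?case .
qed

lemma Pi_reindex:
  assumes "finite I" "inj_on w I" "w ` I \<subseteq> A" "finite A"
  shows "map_pmf (\<lambda>g i. if i \<in> I then g (w i) else d) (Pi_pmf A d (\<lambda>_. D)) = Pi_pmf I d (\<lambda>_. D)"
proof -
  have "Pi_pmf I d (\<lambda>_. D) = map_pmf (\<lambda>g i. if i \<in> I then g (w i) else d) (Pi_pmf (w ` I) d (\<lambda>_. D))"
    using Pi_reindex0[OF assms(1,2)] by metis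
  also have "\<dots> = map_pmf (\<lambda>g i. if i \<in> I then g (w i) else d)
     (map_pmf (\<lambda>f x. if x \<in> w ` I then f x else d) (Pi_pmf A d (\<lambda>_. D)))"
    by (subst Pi_pmf_subset[OF assms(4,3)]) simp
  also have "\<dots> = map_pmf (\<lambda>g i. if i \<in> I then g (w i) else d) (Pi_pmf A d (\<lambda>_. D))"
    unfolding pmf.map_comp by (intro map_pmf_cong refl) (auto simp: fun_eq_iff)
  finally show ?thesis by simp
qed

definition CS :: "'v set \<Rightarrow> 'v \<Rightarrow> 'v dstate \<Rightarrow> 'v set" where
  "CS V r s = {v\<in>V. v \<noteq> r \<and> fst s v \<noteq> None}"
definition BS :: "'v set \<Rightarrow> 'v \<Rightarrow> ('v \<Rightarrow> 'v) \<Rightarrow> 'v dstate \<Rightarrow> 'v set" where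
  "BS V r p s = {v\<in>V. v \<noteq> r \<and> fst s v = None \<and> fst s (p v) \<noteq> None}"
definition org1 :: "'v set \<Rightarrow> 'v \<Rightarrow> ('v \<Rightarrow> 'v) \<Rightarrow> 'v dstate \<Rightarrow> ('v \<Rightarrow> bool) \<Rightarrow> 'v \<Rightarrow> nat option" where
  "org1 V r p s coins = (\<lambda>v. if v = r then Some 0 else if v \<in> CS V r s then (if coins v then fst s (p v) else fst s v) else None)"
definition Fd :: "'v set \<Rightarrow> 'v \<Rightarrow> ('v \<Rightarrow> 'v) \<Rightarrow> ('v \<Rightarrow> nat) \<Rightarrow> 'v dstate \<Rightarrow> ('v \<Rightarrow> bool) \<times> ('v \<Rightarrow> bool \<times> int) \<Rightarrow> 'v dstate" where
  "Fd V r p ord s cx = detf (\<lambda>v. fst s (p v)) (sorted_key_list_of_set ord (BS V r p s)) (snd cx)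
      (org1 V r p s (fst cx), fst (snd s), snd (snd s))"
definition Dz :: "real \<Rightarrow> (bool \<times> int) pmf" where
  "Dz \<alpha> = pair_pmf (bernoulli_pmf \<alpha>) (pmf_of_set {-1, 1::int})"

lemma gval_None: "(gval s v = None) = (fst s v = None)"
  by (simp add: gval_def split: option.split)

context linorder begin
lemma skl:
  assumes "inj_on f V" "A \<subseteq> V" "finite A"
  shows "set (sorted_key_list_of_set f A) = A" "distinct (sorted_key_list_of_set f A)"
proof -
  interpret folding_insort_key "(\<le>)" "(<)" V f by unfold_locales (rule assms(1))
  show "set (sorted_key_list_of_set f A) = A"
    using set_sorted_key_list_of_set[OF assms(2,3)] by simp
  show "distinct (sorted_key_list_of_set f A)"
    using distinct_sorted_key_list_of_set[OF assms(2)] distinct_map by blast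
qed
end

lemma dstep_rep:
  assumes "finite (BS V r p s)" "inj_on ord V"
  shows "dstep \<alpha> \<beta> V r p ord s = map_pmf (Fd V r p ord s)
     (pair_pmf (Pi_pmf (CS V r s) False (\<lambda>_. bernoulli_pmf \<beta>)) (Pi_pmf (BS V r p s) (False,0) (\<lambda>_. Dz \<alpha>)))"
proof -
  have sub: "BS V r p s \<subseteq> V" by (auto simp: BS_def)
  note sk = skl[OF assms(2) sub assms(1)]
  show ?thesis
    unfolding dstep_def Let_def gval_None CS_def[symmetric] BS_def[symmetric]
    apply (simp only: fold_rand[OF sk(2)] sk(1))
    apply (simp add: pair_pmf_def map_pmf_def bind_assoc_pmf bind_return_pmf Fd_def org1_def Dz_def)
    apply (simp only: fst_conv)
    done
qed

definition absE :: "(nat \<Rightarrow> 'v) \<Rightarrow> enat \<Rightarrow> ('v \<Rightarrow> nat option) \<Rightarrow> nat \<Rightarrow> nat \<Rightarrow> bool" where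
  "absE w m og = (\<lambda>i k. enat i \<le> m \<and> enat k \<le> m \<and> og (w i) = og (w k))"
definition absN :: "(nat \<Rightarrow> 'v) \<Rightarrow> enat \<Rightarrow> ('v \<Rightarrow> nat option) \<Rightarrow> nat \<Rightarrow> bool" where
  "absN w m og = (\<lambda>i. enat i \<le> m \<and> og (w i) = None)"
definition absS :: "(nat \<Rightarrow> 'v) \<Rightarrow> enat \<Rightarrow> 'v dstate \<Rightarrow> (nat \<Rightarrow> nat \<Rightarrow> bool) \<times> (nat \<Rightarrow> bool)" where
  "absS w m s = (absE w m (fst s), absN w m (fst s))"

definition symv :: "(nat \<Rightarrow> bool) \<Rightarrow> (nat \<Rightarrow> bool) \<Rightarrow> (nat \<Rightarrow> bool) \<Rightarrow> nat \<Rightarrow> (nat + nat) option" where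
  "symv N cs bs i = (if i = 0 then Some (Inl 0) else if \<not> N i then (if cs i then Some (Inl (i - 1)) else Some (Inl i))
     else if \<not> N (i - 1) then (if bs i then Some (Inr i) else Some (Inl (i - 1))) else None)"

definition eqS :: "(nat \<Rightarrow> nat \<Rightarrow> bool) \<Rightarrow> (nat \<Rightarrow> bool) \<Rightarrow> (nat + nat) option \<Rightarrow> (nat + nat) option \<Rightarrow> bool" where
  "eqS E N a b = (case a of
       None \<Rightarrow> (case b of None \<Rightarrow> True | Some (Inl j) \<Rightarrow> N j | Some (Inr _) \<Rightarrow> False)
     | Some (Inl j) \<Rightarrow> (case b of None \<Rightarrow> N j | Some (Inl j') \<Rightarrow> E j j' | Some (Inr _) \<Rightarrow> False)
     | Some (Inr l) \<Rightarrow> b = Some (Inr l))"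

definition Hk :: "enat \<Rightarrow> (nat \<Rightarrow> nat \<Rightarrow> bool) \<times> (nat \<Rightarrow> bool) \<Rightarrow> (nat \<Rightarrow> bool) \<times> (nat \<Rightarrow> bool)
    \<Rightarrow> (nat \<Rightarrow> nat \<Rightarrow> bool) \<times> (nat \<Rightarrow> bool)" where
  "Hk m a cb = ((\<lambda>i k. enat i \<le> m \<and> enat k \<le> m \<and>
        eqS (fst a) (snd a) (symv (snd a) (fst cb) (snd cb) i) (symv (snd a) (fst cb) (snd cb) k)),
     (\<lambda>i. enat i \<le> m \<and> eqS (fst a) (snd a) (symv (snd a) (fst cb) (snd cb) i) None))"

definition Cidx :: "enat \<Rightarrow> (nat \<Rightarrow> bool) \<Rightarrow> nat set" where
  "Cidx m N = {i. enat i \<le> m \<and> i \<noteq> 0 \<and> \<not> N i}"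
definition Bidx :: "enat \<Rightarrow> (nat \<Rightarrow> bool) \<Rightarrow> nat set" where
  "Bidx m N = {i. enat i \<le> m \<and> i \<noteq> 0 \<and> N i \<and> \<not> N (i - 1)}"

definition Kk :: "real \<Rightarrow> real \<Rightarrow> enat \<Rightarrow> (nat \<Rightarrow> nat \<Rightarrow> bool) \<times> (nat \<Rightarrow> bool)
    \<Rightarrow> ((nat \<Rightarrow> nat \<Rightarrow> bool) \<times> (nat \<Rightarrow> bool)) pmf" where
  "Kk \<alpha> \<beta> m a = map_pmf (Hk m a) (pair_pmf (Pi_pmf (Cidx m (snd a)) False (\<lambda>_. bernoulli_pmf \<beta>))
                                         (Pi_pmf (Bidx m (snd a)) False (\<lambda>_. bernoulli_pmf \<alpha>)))"

definition dinv :: "'v \<Rightarrow> 'v dstate \<Rightarrow> bool" where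
  "dinv r s = (fst s r = Some 0 \<and> (\<forall>v k. fst s v = Some k \<longrightarrow> k < fst (snd s)) \<and> finite {v. fst s v \<noteq> None})"

lemma eqS_correct:
  assumes "\<forall>j. a = Some (Inl j) \<longrightarrow> enat j \<le> m \<and> va = og (w j)" "a = None \<longrightarrow> va = None"
    "\<forall>l. a = Some (Inr l) \<longrightarrow> (\<exists>k. va = Some k \<and> c \<le> k)"
    "\<forall>j. b = Some (Inl j) \<longrightarrow> enat j \<le> m \<and> vb = og (w j)" "b = None \<longrightarrow> vb = None"
    "\<forall>l. b = Some (Inr l) \<longrightarrow> (\<exists>k. vb = Some k \<and> c \<le> k)"
    "\<forall>l l'. a = Some (Inr l) \<longrightarrow> b = Some (Inr l') \<longrightarrow> (va = vb) = (l = l')"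
    "\<forall>v k. og v = Some k \<longrightarrow> k < c"
  shows "(va = vb) = eqS (absE w m og) (absN w m og) a b"
proof (cases a)
  case None
  then show ?thesis using assms
    by (cases b) (auto simp: eqS_def absN_def split: sum.splits)
next
  case (Some a')
  show ?thesis
  proof (cases a')
    case (Inl j)
    then show ?thesis using assms Some
      by (cases b) (auto simp: eqS_def absN_def absE_def split: sum.splits option.splits; fastforce)+
  next
    case (Inr l)
    show ?thesis
    proof (cases b)
      case None
      then show ?thesis using assms Some Inr by (auto simp: eqS_def)
    next
      case (Some b')
      show ?thesis
      proof (cases b')
        case (Inl j)
        obtain k where k: "va = Some k" "c \<le> k" using assms(3) \<open>a = Some a'\<close> Inr by blast
        have vb: "vb = og (w j)" using assms(4) Some Inl by blast
        have "va \<noteq> vb"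
        proof
          assume "va = vb"
          then have "og (w j) = Some k" using vb k by simp
          then show False using assms(8) k(2) by fastforce
        qed
        then show ?thesis using Some Inl \<open>a = Some a'\<close> Inr by (simp add: eqS_def)
      next
        case (Inr l')
        then show ?thesis using assms(7) Some \<open>a = Some a'\<close> \<open>a' = Inr l\<close> by (auto simp: eqS_def)
      qed
    qed
  qed
qed


lemma w_inj:
  assumes A1: "\<forall>i. 1 \<le> i \<and> enat i \<le> m \<longrightarrow> w i \<in> V \<and> w i \<noteq> r \<and> p (w i) = w (i - 1)"
    and A2: "w 0 = r"
  shows "inj_on w {i. enat i \<le> m}"
proof -
  have iter: "(p ^^ n) (w i) = w (i - n)" if "enat i \<le> m" "n \<le> i" for i n
    using that
  proof (induction n)
    case 0 then show ?case by simp
  next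
    case (Suc n)
    have e: "enat (i - n) \<le> m" using Suc.prems by (meson diff_le_self enat_ord_simps(1) order_trans)
    have "(p ^^ Suc n) (w i) = p (w (i - n))" using Suc by simp
    also have "\<dots> = w (i - n - 1)" using A1 e Suc.prems by auto
    finally show ?case by simp
  qed
  have lt: False if "i < k" "enat i \<le> m" "enat k \<le> m" "w i = w k" for i k
  proof -
    have "(p ^^ i) (w i) = r" using iter[of i i] that A2 by simp
    moreover have "(p ^^ i) (w k) = w (k - i)" using iter[of k i] that by simp
    moreover have "enat (k - i) \<le> m" using that by (meson diff_le_self enat_ord_simps(1) order_trans)
    ultimately have "w (k - i) = r" using that by simp
    moreover have "1 \<le> k - i" using that by simp
    ultimately show False using A1 \<open>enat (k - i) \<le> m\<close> by blast
  qed
  show ?thesis unfolding inj_on_def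
    by (metis lt linorder_neqE_nat mem_Collect_eq)
qed

lemma abs_Fd:
  assumes A1: "\<forall>i. 1 \<le> i \<and> enat i \<le> m \<longrightarrow> w i \<in> V \<and> w i \<noteq> r \<and> p (w i) = w (i - 1)"
    and A2: "w 0 = r" and ord: "inj_on ord V" and fin: "finite (BS V r p s)" and inv: "dinv r s"
  shows "absS w m (Fd V r p ord s (coins, x)) = Hk m (absS w m s)
     ((\<lambda>i. if i \<in> Cidx m (absN w m (fst s)) then coins (w i) else False),
      (\<lambda>i. if i \<in> Bidx m (absN w m (fst s)) then fst (x (w i)) else False))"
proof -
  define og where "og = fst s"
  define c where "c = fst (snd s)"
  define N where "N = absN w m og"
  define cs where "cs = (\<lambda>i. if i \<in> Cidx m N then coins (w i) else False)"
  define bs where "bs = (\<lambda>i. if i \<in> Bidx m N then fst (x (w i)) else False)"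
  define sv where "sv = symv N cs bs"
  define xs where "xs = sorted_key_list_of_set ord (BS V r p s)"
  have sub: "BS V r p s \<subseteq> V" by (auto simp: BS_def)
  note sk = skl[OF ord sub fin, folded xs_def]
  obtain o' c' Z' where F: "Fd V r p ord s (coins, x) = (o', c', Z')" by (cases "Fd V r p ord s (coins, x)") auto
  have D: "detf (\<lambda>v. og (p v)) xs x (org1 V r p s coins, c, snd (snd s)) = (o', c', Z')"
    using F by (simp add: Fd_def og_def c_def xs_def)
  note P = detf_props[OF sk(2) D]
  have injw: "inj_on w {i. enat i \<le> m}" by (rule w_inj[OF A1 A2])
  have old: "\<forall>v k. og v = Some k \<longrightarrow> k < c" using inv by (simp add: dinv_def og_def c_def)
  have r0: "og r = Some 0" using inv by (simp add: dinv_def og_def)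
  have rB: "r \<notin> BS V r p s" by (simp add: BS_def)
  have vals: "(sv i = None \<longrightarrow> o' (w i) = None) \<and> (\<forall>j. sv i = Some (Inl j) \<longrightarrow> enat j \<le> m \<and> o' (w i) = og (w j))
      \<and> (\<forall>l. sv i = Some (Inr l) \<longrightarrow> l = i \<and> w i \<in> BS V r p s \<and> fst (x (w i)) \<and> (\<exists>k. o' (w i) = Some k \<and> c \<le> k))"
    if im: "enat i \<le> m" for i
  proof (cases "i = 0")
    case True
    have "o' r = org1 V r p s coins r" using P rB sk(1) by auto
    then have "o' r = Some 0" by (simp add: org1_def)
    moreover have "enat 0 \<le> m" by (simp add: zero_enat_def[symmetric])
    ultimately show ?thesis using True A2 r0 by (simp add: sv_def symv_def)
  next
    case False
    have wi: "w i \<in> V" "w i \<noteq> r" "p (w i) = w (i - 1)" using A1 im False by auto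
    have im1: "enat (i - 1) \<le> m" using im by (meson diff_le_self enat_ord_simps(1) order_trans)
    consider (C) "og (w i) \<noteq> None" | (B) "og (w i) = None" "og (w (i - 1)) \<noteq> None"
      | (Z) "og (w i) = None" "og (w (i - 1)) = None" by blast
    then show ?thesis
    proof cases
      case C
      have nB: "w i \<notin> BS V r p s" using C by (simp add: BS_def og_def)
      have inC: "w i \<in> CS V r s" using C wi by (simp add: CS_def og_def)
      have o': "o' (w i) = (if coins (w i) then og (w (i - 1)) else og (w i))"
        using P nB sk(1) inC wi by (auto simp: org1_def og_def)
      have "i \<in> Cidx m N" using C im False by (simp add: Cidx_def N_def absN_def)
      then have "cs i = coins (w i)" by (simp add: cs_def)
      moreover have "\<not> N i" using C by (simp add: N_def absN_def)
      ultimately show ?thesis using o' False im im1 by (simp add: sv_def symv_def)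
    next
      case B
      have inB: "w i \<in> BS V r p s" using B wi by (simp add: BS_def og_def)
      have "i \<in> Bidx m N" using B im im1 False by (simp add: Bidx_def N_def absN_def)
      then have bsi: "bs i = fst (x (w i))" by (simp add: bs_def)
      have NN: "N i" "\<not> N (i - 1)" using B im im1 by (simp_all add: N_def absN_def)
      show ?thesis
      proof (cases "fst (x (w i))")
        case True
        then have "\<exists>k. o' (w i) = Some k \<and> c \<le> k" using P inB sk(1) by blast
        then show ?thesis using True bsi NN False inB by (simp add: sv_def symv_def)
      next
        case f: False
        then have "o' (w i) = og (w (i - 1))" using P inB sk(1) wi by auto
        then show ?thesis using f bsi NN False im1 by (simp add: sv_def symv_def)
      qed
    next
      case Z
      have nB: "w i \<notin> BS V r p s" using Z wi by (simp add: BS_def og_def)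
      have nC: "w i \<notin> CS V r s" using Z by (simp add: CS_def og_def)
      have "o' (w i) = None" using P nB sk(1) nC wi by (auto simp: org1_def)
      moreover have "N i" "N (i - 1)" using Z im im1 by (simp_all add: N_def absN_def)
      ultimately show ?thesis using False by (simp add: sv_def symv_def)
    qed
  qed
  have fresh: "(o' (w i) = o' (w k)) = (l = l')"
    if "enat i \<le> m" "enat k \<le> m" "sv i = Some (Inr l)" "sv k = Some (Inr l')" for i k l l'
  proof -
    have li: "l = i" "w i \<in> BS V r p s" "fst (x (w i))" using vals[OF that(1)] that(3) by auto
    have lk: "l' = k" "w k \<in> BS V r p s" "fst (x (w k))" using vals[OF that(2)] that(4) by auto
    show ?thesis
    proof (cases "i = k")
      case True then show ?thesis using li lk by simp
    next
      case False
      then have "w i \<noteq> w k" using injw that(1,2) by (auto simp: inj_on_def)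
      then have "o' (w i) \<noteq> o' (w k)" using P li lk sk(1) by blast
      then show ?thesis using False li lk by simp
    qed
  qed
  have eq: "(o' (w i) = o' (w k)) = eqS (absE w m og) N (sv i) (sv k)"
    if "enat i \<le> m" "enat k \<le> m" for i k
    unfolding N_def
    apply (rule eqS_correct[where c = c])
    using vals[OF that(1)] vals[OF that(2)] fresh[OF that] old by auto
  have eqN: "(o' (w i) = None) = eqS (absE w m og) N (sv i) None"
    if "enat i \<le> m" for i
    unfolding N_def
    apply (rule eqS_correct[where c = c])
    using vals[OF that(1)] old by auto
  have "absS w m (o', c', Z') = Hk m (absE w m og, N) (cs, bs)"
    unfolding absS_def Hk_def
    by (auto simp: fun_eq_iff absE_def absN_def eq eqN sv_def[symmetric] N_def[symmetric]
      intro: eq[THEN iffD1] eq[THEN iffD2] eqN[THEN iffD1] eqN[THEN iffD2])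
  then show ?thesis using F by (simp add: absS_def og_def N_def cs_def bs_def)
qed


lemma BS_fin:
  assumes A4: "\<forall>u. finite {v\<in>V. v \<noteq> r \<and> p v = u}" and inv: "dinv r s"
  shows "finite (BS V r p s)"
proof -
  have "BS V r p s \<subseteq> (\<Union>u\<in>{v. fst s v \<noteq> None}. {v\<in>V. v \<noteq> r \<and> p v = u})"
    by (auto simp: BS_def)
  moreover have "finite (\<Union>u\<in>{v. fst s v \<noteq> None}. {v\<in>V. v \<noteq> r \<and> p v = u})"
    using inv A4 by (intro finite_UN_I) (auto simp: dinv_def)
  ultimately show ?thesis by (rule finite_subset)
qed

lemma CS_fin: "dinv r s \<Longrightarrow> finite (CS V r s)"
  by (rule finite_subset[of _ "{v. fst s v \<noteq> None}"]) (auto simp: CS_def dinv_def)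

lemma inv_step:
  assumes A4: "\<forall>u. finite {v\<in>V. v \<noteq> r \<and> p v = u}" and ord: "inj_on ord V" and inv: "dinv r s"
    and s': "s' \<in> set_pmf (dstep \<alpha> \<beta> V r p ord s)"
  shows "dinv r s'"
proof -
  have fin: "finite (BS V r p s)" by (rule BS_fin[OF A4 inv])
  obtain coins x where s'eq: "s' = Fd V r p ord s (coins, x)"
    using s' unfolding dstep_rep[OF fin ord] by auto
  define og where "og = fst s"
  define c where "c = fst (snd s)"
  define xs where "xs = sorted_key_list_of_set ord (BS V r p s)"
  have sub: "BS V r p s \<subseteq> V" by (auto simp: BS_def)
  note sk = skl[OF ord sub fin, folded xs_def]
  obtain o' c' Z' where F: "Fd V r p ord s (coins, x) = (o', c', Z')" by (cases "Fd V r p ord s (coins, x)") auto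
  have D: "detf (\<lambda>v. og (p v)) xs x (org1 V r p s coins, c, snd (snd s)) = (o', c', Z')"
    using F by (simp add: Fd_def og_def c_def xs_def)
  note P = detf_props[OF sk(2) D]
  have old: "\<forall>v k. og v = Some k \<longrightarrow> k < c" using inv by (simp add: dinv_def og_def c_def)
  have r0: "og r = Some 0" using inv by (simp add: dinv_def og_def)
  have c0: "0 < c" using old r0 by blast
  have rB: "r \<notin> BS V r p s" by (simp add: BS_def)
  have 1: "o' r = Some 0" using P rB sk(1) by (auto simp: org1_def)
  have 2: "k < c'" if "o' v = Some k" for v k
  proof (cases "v \<in> BS V r p s")
    case True
    then show ?thesis using P sk(1) that old by (cases "fst (x v)") fastforce+
  next
    case False
    then have ov: "o' v = org1 V r p s coins v" using P sk(1) by auto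
    have cc: "c \<le> c'" using P by simp
    have "o' v = Some 0 \<or> o' v = og (p v) \<or> o' v = og v \<or> o' v = None"
      using ov by (auto simp: org1_def og_def)
    then have "k < c" using that old c0 by auto
    then show ?thesis using cc by simp
  qed
  have "{v. o' v \<noteq> None} \<subseteq> insert r (BS V r p s \<union> {v. og v \<noteq> None})"
  proof
    fix v assume v: "v \<in> {v. o' v \<noteq> None}"
    show "v \<in> insert r (BS V r p s \<union> {v. og v \<noteq> None})"
    proof (cases "v \<in> BS V r p s")
      case False
      then have "o' v = org1 V r p s coins v" using P sk(1) by auto
      then show ?thesis using v by (auto simp: org1_def CS_def og_def split: if_splits)
    qed simp
  qed
  moreover have "finite (insert r (BS V r p s \<union> {v. og v \<noteq> None}))"
    using fin inv by (simp add: dinv_def og_def)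
  ultimately have 3: "finite {v. o' v \<noteq> None}" by (rule finite_subset)
  show ?thesis unfolding s'eq F dinv_def using 1 2 3 by auto
qed

lemma inv_reach:
  assumes A4: "\<forall>u. finite {v\<in>V. v \<noteq> r \<and> p v = u}" and ord: "inj_on ord V"
  shows "s \<in> set_pmf (dproc \<alpha> \<beta> V r p ord t) \<Longrightarrow> dinv r s"
proof (induction t arbitrary: s)
  case 0
  then show ?case by (simp add: dinit_def dinv_def)
next
  case (Suc t)
  then obtain s0 where "s0 \<in> set_pmf (dproc \<alpha> \<beta> V r p ord t)" "s \<in> set_pmf (dstep \<alpha> \<beta> V r p ord s0)"
    by auto
  then show ?case using inv_step[OF A4 ord] Suc.IH by blast
qed

lemma map_dstep:
  assumes A1: "\<forall>i. 1 \<le> i \<and> enat i \<le> m \<longrightarrow> w i \<in> V \<and> w i \<noteq> r \<and> p (w i) = w (i - 1)"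
    and A2: "w 0 = r" and ord: "inj_on ord V" and A4: "\<forall>u. finite {v\<in>V. v \<noteq> r \<and> p v = u}"
    and inv: "dinv r s"
  shows "map_pmf (absS w m) (dstep \<alpha> \<beta> V r p ord s) = Kk \<alpha> \<beta> m (absS w m s)"
proof -
  have fin: "finite (BS V r p s)" by (rule BS_fin[OF A4 inv])
  have finC: "finite (CS V r s)" by (rule CS_fin[OF inv])
  define N where "N = absN w m (fst s)"
  define CI where "CI = Cidx m N"
  define BI where "BI = Bidx m N"
  have injw: "inj_on w {i. enat i \<le> m}" by (rule w_inj[OF A1 A2])
  have injC: "inj_on w CI" by (rule inj_on_subset[OF injw]) (auto simp: CI_def Cidx_def)
  have injB: "inj_on w BI" by (rule inj_on_subset[OF injw]) (auto simp: BI_def Bidx_def)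
  have im1: "enat (i - 1) \<le> m" if "enat i \<le> m" for i
    using that by (meson diff_le_self enat_ord_simps(1) order_trans)
  have wi: "w i \<in> V \<and> w i \<noteq> r \<and> p (w i) = w (i - 1)" if "i \<noteq> 0" "enat i \<le> m" for i
    using A1 that by auto
  have subC: "w ` CI \<subseteq> CS V r s"
  proof (rule image_subsetI)
    fix i assume "i \<in> CI"
    then have "i \<noteq> 0" "enat i \<le> m" "fst s (w i) \<noteq> None" by (auto simp: CI_def Cidx_def N_def absN_def)
    then show "w i \<in> CS V r s" using wi[of i] unfolding CS_def by blast
  qed
  have subB: "w ` BI \<subseteq> BS V r p s"
  proof (rule image_subsetI)
    fix i assume "i \<in> BI"
    then have "i \<noteq> 0" "enat i \<le> m" "fst s (w i) = None" "fst s (w (i - 1)) \<noteq> None"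
      using im1 by (auto simp: BI_def Bidx_def N_def absN_def)
    then show "w i \<in> BS V r p s" using wi[of i] unfolding BS_def by auto
  qed
  have fCI: "finite CI" using finite_imageD[OF finite_subset[OF subC finC] injC] .
  have fBI: "finite BI" using finite_imageD[OF finite_subset[OF subB fin] injB] .
  let ?r1 = "\<lambda>g i. if i \<in> CI then g (w i) else False"
  let ?r2 = "\<lambda>x i. if i \<in> BI then fst (x (w i)) else False"
  let ?PC = "Pi_pmf (CS V r s) False (\<lambda>_. bernoulli_pmf \<beta>)"
  let ?PB = "Pi_pmf (BS V r p s) (False, 0) (\<lambda>_. Dz \<alpha>)"
  have "map_pmf (absS w m) (dstep \<alpha> \<beta> V r p ord s)
      = map_pmf (\<lambda>(g, x). Hk m (absS w m s) (?r1 g, ?r2 x)) (pair_pmf ?PC ?PB)"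
    unfolding dstep_rep[OF fin ord] pmf.map_comp
    by (intro map_pmf_cong refl) (auto simp: abs_Fd[OF A1 A2 ord fin inv] CI_def BI_def N_def)
  also have "\<dots> = map_pmf (Hk m (absS w m s)) (map_pmf (\<lambda>(g, x). (?r1 g, ?r2 x)) (pair_pmf ?PC ?PB))"
    by (simp add: pmf.map_comp case_prod_unfold o_def)
  also have "\<dots> = map_pmf (Hk m (absS w m s)) (pair_pmf (map_pmf ?r1 ?PC) (map_pmf ?r2 ?PB))"
    by (simp only: map_pair)
  also have "map_pmf ?r1 ?PC = Pi_pmf CI False (\<lambda>_. bernoulli_pmf \<beta>)"
    by (rule Pi_reindex[OF fCI injC subC finC])
  also have "map_pmf ?r2 ?PB = map_pmf (\<lambda>h. fst \<circ> h) (map_pmf (\<lambda>g i. if i \<in> BI then g (w i) else (False, 0)) ?PB)"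
    by (simp add: pmf.map_comp o_def if_distrib cong: if_cong)
  also have "map_pmf (\<lambda>g i. if i \<in> BI then g (w i) else (False, 0)) ?PB = Pi_pmf BI (False, 0) (\<lambda>_. Dz \<alpha>)"
    by (rule Pi_reindex[OF fBI injB subB fin])
  also have "map_pmf (\<lambda>h. fst \<circ> h) (Pi_pmf BI (False, 0) (\<lambda>_. Dz \<alpha>)) = Pi_pmf BI False (\<lambda>_. map_pmf fst (Dz \<alpha>))"
    by (rule Pi_pmf_map[symmetric]) (simp_all add: fBI)
  also have "map_pmf fst (Dz \<alpha>) = bernoulli_pmf \<alpha>"
    by (simp add: Dz_def map_fst_pair_pmf)
  moreover have "snd (absS w m s) = N" by (simp add: absS_def N_def)
  ultimately show ?thesis by (simp add: Kk_def CI_def BI_def)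
qed

primrec Kit :: "real \<Rightarrow> real \<Rightarrow> enat \<Rightarrow> (nat \<Rightarrow> nat \<Rightarrow> bool) \<times> (nat \<Rightarrow> bool) \<Rightarrow> nat
    \<Rightarrow> ((nat \<Rightarrow> nat \<Rightarrow> bool) \<times> (nat \<Rightarrow> bool)) pmf" where
  "Kit \<alpha> \<beta> m a0 0 = return_pmf a0"
| "Kit \<alpha> \<beta> m a0 (Suc t) = bind_pmf (Kit \<alpha> \<beta> m a0 t) (Kk \<alpha> \<beta> m)"

definition a0 :: "enat \<Rightarrow> (nat \<Rightarrow> nat \<Rightarrow> bool) \<times> (nat \<Rightarrow> bool)" where
  "a0 m = ((\<lambda>i k. enat i \<le> m \<and> enat k \<le> m \<and> (i = 0 \<longleftrightarrow> k = 0)), (\<lambda>i. enat i \<le> m \<and> i \<noteq> 0))"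

lemma main_gen:
  assumes A1: "\<forall>i. 1 \<le> i \<and> enat i \<le> m \<longrightarrow> w i \<in> V \<and> w i \<noteq> r \<and> p (w i) = w (i - 1)"
    and A2: "w 0 = r" and ord: "inj_on ord V" and A4: "\<forall>u. finite {v\<in>V. v \<noteq> r \<and> p v = u}"
  shows "map_pmf (absS w m) (dproc \<alpha> \<beta> V r p ord t) = Kit \<alpha> \<beta> m (a0 m) t"
proof (induction t)
  case 0
  have wr: "(w i = r) = (i = 0)" if "enat i \<le> m" for i
    using A1 A2 that by (cases "i = 0") auto
  have dw: "fst (dinit r) (w i) = (if i = 0 then Some 0 else None)" if "enat i \<le> m" for i
    using wr[OF that] by (simp add: dinit_def)
  have e1: "(enat i \<le> m \<and> enat k \<le> m \<and> fst (dinit r) (w i) = fst (dinit r) (w k))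
      = (enat i \<le> m \<and> enat k \<le> m \<and> (i = 0 \<longleftrightarrow> k = 0))" for i k
    by (cases "enat i \<le> m"; cases "enat k \<le> m") (simp_all add: dw)
  have e2: "(enat i \<le> m \<and> fst (dinit r) (w i) = None) = (enat i \<le> m \<and> i \<noteq> 0)" for i
    by (cases "enat i \<le> m") (simp_all add: dw)
  have "absS w m (dinit r) = a0 m"
    unfolding absS_def absE_def absN_def a0_def e1 e2 ..
  then show ?case by simp
next
  case (Suc t)
  have "map_pmf (absS w m) (dproc \<alpha> \<beta> V r p ord (Suc t))
      = bind_pmf (dproc \<alpha> \<beta> V r p ord t) (\<lambda>s. map_pmf (absS w m) (dstep \<alpha> \<beta> V r p ord s))"
    by (simp add: map_bind_pmf)
  also have "\<dots> = bind_pmf (dproc \<alpha> \<beta> V r p ord t) (\<lambda>s. Kk \<alpha> \<beta> m (absS w m s))"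
    by (intro bind_pmf_cong refl map_dstep[OF A1 A2 ord A4] inv_reach[OF A4 ord])
  also have "\<dots> = bind_pmf (map_pmf (absS w m) (dproc \<alpha> \<beta> V r p ord t)) (Kk \<alpha> \<beta> m)"
    by (simp add: bind_map_pmf)
  finally show ?case using Suc by simp
qed

lemma prob_gen:
  assumes A1: "\<forall>i. 1 \<le> i \<and> enat i \<le> m \<longrightarrow> w i \<in> V \<and> w i \<noteq> r \<and> p (w i) = w (i - 1)"
    and A2: "w 0 = r" and ord: "inj_on ord V" and A4: "\<forall>u. finite {v\<in>V. v \<noteq> r \<and> p v = u}"
    and j: "enat j \<le> m" "enat j' \<le> m"
  shows "same_origin_prob \<alpha> \<beta> V r p ord t (w j) (w j') = measure_pmf.prob (Kit \<alpha> \<beta> m (a0 m) t) {a. fst a j j'}"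
proof -
  have "{s. fst s (w j) = fst s (w j')} = absS w m -` {a. fst a j j'}"
    using j by (auto simp: absS_def absE_def)
  then show ?thesis
    unfolding same_origin_prob_def main_gen[OF A1 A2 ord A4, symmetric] measure_map_pmf by simp
qed


theorem mainTheorem4:
  fixes \<alpha> \<beta> :: real and V :: "'v set" and E :: "'v \<Rightarrow> 'v \<Rightarrow> bool" and r :: 'v
    and p :: "'v \<Rightarrow> 'v" and ord :: "'v \<Rightarrow> nat" and ordP :: "nat \<Rightarrow> nat"
    and m :: enat and w :: "nat \<Rightarrow> 'v" and t j j' :: nat
  assumes "0 \<le> \<alpha>" "\<alpha> \<le> 1" "0 \<le> \<beta>" "\<beta> \<le> 1"
    and "conn_lf_graph V E r"
    and "bfs_tree V E r p"
    and "inj_on ord V"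
    and "inj_on ordP (path_vertices m)"
    and "w 0 = r"
    and "\<forall>i. 1 \<le> i \<and> enat i \<le> m \<longrightarrow> w i \<in> V \<and> w i \<noteq> r \<and> p (w i) = w (i - 1)"
    and "0 < t"
    and "j < j'" "enat j' \<le> m"
  shows "same_origin_prob \<alpha> \<beta> V r p ord t (w j) (w j') =
         same_origin_prob \<alpha> \<beta> (path_vertices m) 0 path_parent ordP t j j'"
proof -
  note G = assms(5)[unfolded conn_lf_graph_def]
  obtain \<sigma> :: "'v \<Rightarrow> nat" where sg: "\<forall>v\<in>V. v \<noteq> r \<longrightarrow> p v \<in> V \<and> E v (p v)"
    using assms(6) unfolding bfs_tree_def by blast
  have A4: "\<forall>u. finite {v\<in>V. v \<noteq> r \<and> p v = u}"
  proof
    fix u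
    show "finite {v\<in>V. v \<noteq> r \<and> p v = u}"
    proof (cases "u \<in> V")
      case True
      have "{v\<in>V. v \<noteq> r \<and> p v = u} \<subseteq> {x. E u x}" using sg G by auto
      moreover have "finite {x. E u x}" using G True by blast
      ultimately show ?thesis by (rule finite_subset)
    next
      case False
      then have e: "{v\<in>V. v \<noteq> r \<and> p v = u} = {}" using sg by auto
      show ?thesis unfolding e by (rule finite.emptyI)
    qed
  qed
  have jm: "enat j \<le> m" using assms(12,13) by (meson enat_ord_simps(1) less_imp_le order_trans)
  have L: "same_origin_prob \<alpha> \<beta> V r p ord t (w j) (w j') = measure_pmf.prob (Kit \<alpha> \<beta> m (a0 m) t) {a. fst a j j'}"
    by (rule prob_gen[OF assms(10) assms(9) assms(7) A4 jm assms(13)])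
  have P1: "\<forall>i. 1 \<le> i \<and> enat i \<le> m \<longrightarrow> (\<lambda>i. i) i \<in> path_vertices m \<and> (\<lambda>i. i) i \<noteq> 0 \<and> path_parent ((\<lambda>i. i) i) = (\<lambda>i. i) (i - 1)"
    by (auto simp: path_vertices_def path_parent_def)
  have P4: "\<forall>u. finite {v\<in>path_vertices m. v \<noteq> 0 \<and> path_parent v = u}"
  proof
    fix u
    have "{v\<in>path_vertices m. v \<noteq> 0 \<and> path_parent v = u} \<subseteq> {Suc u}" by (auto simp: path_parent_def)
    then show "finite {v\<in>path_vertices m. v \<noteq> 0 \<and> path_parent v = u}" by (rule finite_subset) simp
  qed
  have R: "same_origin_prob \<alpha> \<beta> (path_vertices m) 0 path_parent ordP t ((\<lambda>i. i) j) ((\<lambda>i. i) j')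
      = measure_pmf.prob (Kit \<alpha> \<beta> m (a0 m) t) {a. fst a j j'}"
    by (rule prob_gen[OF P1 _ assms(8) P4 jm assms(13)]) simp
  show ?thesis using L R by simp
qed

end
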